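(* Let $m\ge2$, $K$ an algebraic number field, $a(z)\in K[z]$ monic of degree $m$, $b(z)\in K[z]$ of degree $\le m-1$ with $z^{m-1}$-coefficient $b_{m-1}$, with $a(z)=\prod_{i=1}^m(z-\alpha_i)$, $\alpha_i\in K$ pairwise distinct, $s_i:=b(\alpha_i)/a'(\alpha_i)\in\mathbb{Q}\setminus\mathbb{Z}_{\le-1}$, $b_{m-1}\notin\mathbb{Z}_{<-1}$. Let $v$ be an Archimedean place of $K$ and put $c_v(\boldsymbol\alpha)=\sum_{i=1}^m\mathrm{h}_v(\alpha_i)+m\log|4|_v$. Then, as $n\to\infty$, \[\log\max_{0\le\ell\le m-1}\{\|P_{n,\ell}\|_v\}\le n\,c_v(\boldsymbol\alpha)+o(n).\]
   Context: $P_{n,\ell}(z)=\frac1{n!}(\frac{d}{dz}+\frac{b(z)}{a(z)})^n(a(z)^nz^\ell)$ (operator applied $n$ times; a polynomial). For $R=\sum_kr_kz^k$, $\|R\|_v=\max_k|r_k|_v$. For Archimedean $v$ with embedding $\iota_v$, $|x|_v=|\iota_v(x)|^{[K_v:\mathbb{R}]/[K:\mathbb{Q}]}$; $\mathrm{h}_v(\alpha)=\log\max\{1,|\alpha|_v\}$. $o(n)$ denotes a quantity $g(n)$ with $g(n)/n\to0$. *)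

theory Defs
  imports "HOL-Analysis.Analysis" "HOL-Computational_Algebra.Polynomial"
begin

text \<open>A number field, realised (without loss of generality) as a subfield of the
complex numbers that is finite-dimensional over the rationals.\<close>

definition q_spans :: "complex list \<Rightarrow> complex set \<Rightarrow> bool" where
  "q_spans bs K \<longleftrightarrow> (\<forall>x\<in>K. \<exists>c :: nat \<Rightarrow> complex.
      (\<forall>i. c i \<in> \<rat>) \<and> x = (\<Sum>i<length bs. c i * bs ! i))"

definition number_field :: "complex set \<Rightarrow> bool" where
  "number_field K \<longleftrightarrow> 0 \<in> K \<and> 1 \<in> K \<and>
     (\<forall>x\<in>K. \<forall>y\<in>K. x + y \<in> K \<and> x - y \<in> K \<and> x * y \<in> K) \<and>
     (\<forall>x\<in>K. x \<noteq> 0 \<longrightarrow> inverse x \<in> K) \<and>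
     (\<exists>bs. set bs \<subseteq> K \<and> q_spans bs K)"

text \<open>The degree [K:Q] = minimal size of a Q-spanning family (= dimension).\<close>
definition nf_degree :: "complex set \<Rightarrow> nat" where
  "nf_degree K = (LEAST n. \<exists>bs. length bs = n \<and> set bs \<subseteq> K \<and> q_spans bs K)"

definition field_embedding :: "complex set \<Rightarrow> (complex \<Rightarrow> complex) \<Rightarrow> bool" where
  "field_embedding K \<iota> \<longleftrightarrow> \<iota> 1 = 1 \<and>
     (\<forall>x\<in>K. \<forall>y\<in>K. \<iota> (x + y) = \<iota> x + \<iota> y \<and> \<iota> (x * y) = \<iota> x * \<iota> y)"

text \<open>Local degree [K_v : R] of the Archimedean place v given by the embedding.\<close>
definition local_degree :: "complex set \<Rightarrow> (complex \<Rightarrow> complex) \<Rightarrow> nat" where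
  "local_degree K \<iota> = (if \<iota> ` K \<subseteq> \<real> then 1 else 2)"

definition abs_v :: "complex set \<Rightarrow> (complex \<Rightarrow> complex) \<Rightarrow> complex \<Rightarrow> real" where
  "abs_v K \<iota> x = norm (\<iota> x) powr (real (local_degree K \<iota>) / real (nf_degree K))"

definition h_v :: "complex set \<Rightarrow> (complex \<Rightarrow> complex) \<Rightarrow> complex \<Rightarrow> real" where
  "h_v K \<iota> x = ln (max 1 (abs_v K \<iota> x))"

definition poly_norm_v :: "complex set \<Rightarrow> (complex \<Rightarrow> complex) \<Rightarrow> complex poly \<Rightarrow> real" where
  "poly_norm_v K \<iota> p = Max ((\<lambda>k. abs_v K \<iota> (coeff p k)) ` {0..degree p})"

definition diff_op :: "complex poly \<Rightarrow> complex poly \<Rightarrow> (complex \<Rightarrow> complex) \<Rightarrow> complex \<Rightarrow> complex" where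
  "diff_op a b f = (\<lambda>z. deriv f z + poly b z / poly a z * f z)"

text \<open>P_{n,l}(z) = (1/n!) (d/dz + b/a)^n (a^n z^l), as the polynomial agreeing with
this function away from the zeros of a.\<close>
definition P_poly :: "complex poly \<Rightarrow> complex poly \<Rightarrow> nat \<Rightarrow> nat \<Rightarrow> complex poly" where
  "P_poly a b n l = (THE p. \<forall>z. poly a z \<noteq> 0 \<longrightarrow>
      poly p z = ((diff_op a b ^^ n) (\<lambda>z. poly a z ^ n * z ^ l) z) / fact n)"

end

theory Submission
  imports Defs "HOL-Real_Asymp.Real_Asymp"
begin

definition Top :: "complex poly \<Rightarrow> complex poly \<Rightarrow> complex \<Rightarrow> complex poly \<Rightarrow> complex poly" where
  "Top A B c G = smult c (pderiv A * G) + A * pderiv G + B * G"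

fun Tk :: "complex poly \<Rightarrow> complex poly \<Rightarrow> nat \<Rightarrow> complex \<Rightarrow> complex poly \<Rightarrow> complex poly" where
  "Tk A B 0 c G = G"
| "Tk A B (Suc k) c G = Top A B (c - of_nat k) (Tk A B k c G)"

lemma Top_add: "Top A B c (G + H) = Top A B c G + Top A B c H"
  by (simp add: Top_def pderiv_add algebra_simps smult_add_right)

lemma Top_zero: "Top A B c 0 = 0"
  by (simp add: Top_def)

lemma Top_ofnat: "Top A B c (of_nat n * G) = of_nat n * Top A B c G"
  by (simp add: Top_def pderiv_mult of_nat_poly algebra_simps pderiv_smult)

lemma Top_sum: "Top A B c (\<Sum>j\<in>S. f j) = (\<Sum>j\<in>S. Top A B c (f j))"
  by (induction S rule: infinite_finite_induct) (auto simp: Top_add Top_zero)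

lemma smult_const: "smult a p = [:a:] * p"
  by simp

lemma pderiv_pow_mult: "A * pderiv (A ^ p) = [:of_nat p:] * A ^ p * pderiv A"
proof (cases p)
  case (Suc n)
  show ?thesis unfolding Suc pderiv_power_Suc by (simp add: algebra_simps)
qed simp

lemma Top_step:
  assumes "j \<le> k"
  shows "Top (A1*A2) (B1*A2 + A1*B2) (c - of_nat k) (A1^(k-j) * X * A2^j * Y)
    = A1^(k-j) * Top A1 B1 (c - of_nat j) X * A2^(Suc j) * Y
      + A1^(Suc (k-j)) * X * A2^j * Top A2 B2 (c - of_nat (k-j)) Y"
proof -
  define P where "P = A1^(k-j)"
  define Q where "Q = A2^j"
  define g where "g = [:c - of_nat k:]"
  have h1: "A1 * pderiv P = [:of_nat (k-j):] * P * pderiv A1" unfolding P_def by (rule pderiv_pow_mult)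
  have h2: "A2 * pderiv Q = [:of_nat j:] * Q * pderiv A2" unfolding Q_def by (rule pderiv_pow_mult)
  have e1: "[:c - of_nat j:] = g + [:of_nat (k-j):]" using assms by (simp add: g_def of_nat_diff)
  have e2: "[:c - of_nat (k-j):] = g + [:of_nat j:]" using assms by (simp add: g_def of_nat_diff)
  have pd: "pderiv (P * X * Q * Y) = pderiv P * X * Q * Y + P * pderiv X * Q * Y + P * X * pderiv Q * Y + P * X * Q * pderiv Y"
    by (simp add: pderiv_mult algebra_simps)
  have L: "Top (A1*A2) (B1*A2 + A1*B2) (c - of_nat k) (P * X * Q * Y) =
     g * ((pderiv A1 * A2 + A1 * pderiv A2) * (P*X*Q*Y)) + A1*A2*(pderiv P * X * Q * Y + P * pderiv X * Q * Y + P * X * pderiv Q * Y + P * X * Q * pderiv Y)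
     + (B1*A2 + A1*B2) * (P*X*Q*Y)"
    unfolding Top_def smult_const pd g_def by (simp add: pderiv_mult algebra_simps)
  have R: "P * Top A1 B1 (c - of_nat j) X * (A2 * Q) * Y + (A1 * P) * X * Q * Top A2 B2 (c - of_nat (k-j)) Y
     = P * ((g + [:of_nat (k-j):]) * (pderiv A1 * X) + A1 * pderiv X + B1 * X) * (A2 * Q) * Y
       + (A1 * P) * X * Q * ((g + [:of_nat j:]) * (pderiv A2 * Y) + A2 * pderiv Y + B2 * Y)"
    unfolding Top_def smult_const e1 e2 by simp
  have "Top (A1*A2) (B1*A2 + A1*B2) (c - of_nat k) (P * X * Q * Y) =
     P * Top A1 B1 (c - of_nat j) X * (A2 * Q) * Y + (A1 * P) * X * Q * Top A2 B2 (c - of_nat (k-j)) Y"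
    unfolding L R using h1 h2 by algebra
  then show ?thesis by (simp add: P_def Q_def algebra_simps)
qed

lemma pascal_sum:
  fixes t :: "nat \<Rightarrow> 'a::comm_ring_1"
  shows "(\<Sum>j\<le>k. of_nat (k choose j) * (t (Suc j) + t j)) = (\<Sum>j\<le>Suc k. of_nat (Suc k choose j) * t j)"
proof -
  have a: "(\<Sum>j\<le>Suc k. of_nat (Suc k choose j) * t j)
      = t 0 + (\<Sum>j\<le>k. of_nat (k choose j) * t (Suc j) + of_nat (k choose Suc j) * t (Suc j))"
    by (subst sum.atMost_Suc_shift) (simp add: algebra_simps)
  have b: "t 0 + (\<Sum>j\<le>k. of_nat (k choose Suc j) * t (Suc j)) = (\<Sum>j\<le>Suc k. of_nat (k choose j) * t j)"
    by (subst sum.atMost_Suc_shift) simp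
  have c: "(\<Sum>j\<le>Suc k. of_nat (k choose j) * t j) = (\<Sum>j\<le>k. of_nat (k choose j) * t j)"
    by (simp add: binomial_eq_0)
  show ?thesis using a b c by (simp add: sum.distrib algebra_simps)
qed

lemma Tk_prod:
  "Tk (A1*A2) (B1*A2 + A1*B2) k c (G1*G2) =
    (\<Sum>j\<le>k. of_nat (k choose j) * (A1^(k-j) * Tk A1 B1 j c G1 * A2^j * Tk A2 B2 (k-j) c G2))"
proof (induction k)
  case 0
  then show ?case by simp
next
  case (Suc k)
  define t where "t j = A1^(Suc k-j) * Tk A1 B1 j c G1 * A2^j * Tk A2 B2 (Suc k-j) c G2" for j
  have "Tk (A1*A2) (B1*A2 + A1*B2) (Suc k) c (G1*G2) =
     (\<Sum>j\<le>k. of_nat (k choose j) * Top (A1*A2) (B1*A2 + A1*B2) (c - of_nat k)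
          (A1^(k-j) * Tk A1 B1 j c G1 * A2^j * Tk A2 B2 (k-j) c G2))"
    by (simp add: Suc Top_sum Top_ofnat)
  also have "\<dots> = (\<Sum>j\<le>k. of_nat (k choose j) * (t (Suc j) + t j))"
  proof (rule sum.cong[OF refl])
    fix j assume "j \<in> {..k}"
    then have jk: "j \<le> k" by simp
    have "Suc k - j = Suc (k - j)" using jk by simp
    then show "of_nat (k choose j) * Top (A1*A2) (B1*A2 + A1*B2) (c - of_nat k)
          (A1^(k-j) * Tk A1 B1 j c G1 * A2^j * Tk A2 B2 (k-j) c G2) = of_nat (k choose j) * (t (Suc j) + t j)"
      unfolding Top_step[OF jk] t_def by simp
  qed
  also have "\<dots> = (\<Sum>j\<le>Suc k. of_nat (Suc k choose j) * t j)" by (rule pascal_sum)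
  finally show ?case unfolding t_def .
qed

definition l1 :: "complex poly \<Rightarrow> real" where
  "l1 p = (\<Sum>i\<le>degree p. norm (coeff p i))"

lemma l1_ext: "degree p \<le> D \<Longrightarrow> l1 p = (\<Sum>i\<le>D. norm (coeff p i))"
  unfolding l1_def
  by (rule sum.mono_neutral_left) (auto simp: coeff_eq_0)

lemma l1_nonneg: "0 \<le> l1 p"
  unfolding l1_def by (simp add: sum_nonneg)

lemma coeff_le_l1: "norm (coeff p i) \<le> l1 p"
proof (cases "i \<le> degree p")
  case True
  then show ?thesis unfolding l1_def
    by (intro member_le_sum) auto
next
  case False
  then show ?thesis by (simp add: coeff_eq_0 l1_nonneg)
qed

lemma l1_add: "l1 (p + q) \<le> l1 p + l1 q"
proof -
  let ?D = "max (degree p) (degree q)"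
  have "l1 (p + q) = (\<Sum>i\<le>?D. norm (coeff (p+q) i))"
    by (rule l1_ext) (simp add: degree_add_le)
  also have "\<dots> \<le> (\<Sum>i\<le>?D. norm (coeff p i) + norm (coeff q i))"
    by (intro sum_mono) (simp add: norm_triangle_ineq)
  also have "\<dots> = l1 p + l1 q"
    by (simp add: sum.distrib l1_ext[symmetric])
  finally show ?thesis .
qed

lemma l1_zero [simp]: "l1 0 = 0"
  by (simp add: l1_def)

lemma l1_sum: "l1 (\<Sum>j\<in>S. f j) \<le> (\<Sum>j\<in>S. l1 (f j))"
proof (induction S rule: infinite_finite_induct)
  case (insert x F)
  then show ?case using l1_add[of "f x" "sum f F"] by simp
qed auto

lemma l1_smult: "l1 (smult a p) = norm a * l1 p"
proof -
  have "l1 (smult a p) = (\<Sum>i\<le>degree p. norm (coeff (smult a p) i))"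
    by (rule l1_ext) (simp add: degree_smult_le)
  then show ?thesis by (simp add: l1_def norm_mult sum_distrib_left)
qed

lemma l1_pCons: "l1 (pCons a p) = norm a + l1 p"
proof -
  have "l1 (pCons a p) = (\<Sum>i\<le>Suc (degree p). norm (coeff (pCons a p) i))"
    by (rule l1_ext) (simp add: degree_pCons_le)
  also have "\<dots> = norm a + l1 p"
    by (subst sum.atMost_Suc_shift) (simp add: l1_def)
  finally show ?thesis .
qed

lemma l1_mult: "l1 (p * q) \<le> l1 p * l1 q"
proof (induction p rule: pCons_induct)
  case 0
  then show ?case by simp
next
  case (pCons a p)
  have "l1 (pCons a p * q) = l1 (smult a q + pCons 0 (p * q))" by simp
  also have "\<dots> \<le> l1 (smult a q) + l1 (pCons 0 (p * q))" by (rule l1_add)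
  also have "\<dots> = norm a * l1 q + l1 (p * q)" by (simp add: l1_smult l1_pCons)
  also have "\<dots> \<le> norm a * l1 q + l1 p * l1 q" using pCons.IH by simp
  also have "\<dots> = l1 (pCons a p) * l1 q" by (simp add: l1_pCons algebra_simps)
  finally show ?case .
qed

lemma l1_one [simp]: "l1 1 = 1"
  by (simp add: l1_def)

lemma l1_const [simp]: "l1 [:a:] = norm a"
  by (simp add: l1_def)

lemma l1_power: "l1 (p ^ k) \<le> l1 p ^ k"
proof (induction k)
  case (Suc k)
  have "l1 (p ^ Suc k) \<le> l1 p * l1 (p ^ k)" using l1_mult[of p "p^k"] by simp
  also have "\<dots> \<le> l1 p * l1 p ^ k" using Suc by (simp add: mult_left_mono l1_nonneg)
  finally show ?case by simp
qed simp

lemma l1_prod: "l1 (\<Prod>i\<in>S. f i) \<le> (\<Prod>i\<in>S. l1 (f i))"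
proof (induction S rule: infinite_finite_induct)
  case (insert x F)
  have "l1 (\<Prod>i\<in>insert x F. f i) \<le> l1 (f x) * l1 (\<Prod>i\<in>F. f i)"
    using insert l1_mult by simp
  also have "\<dots> \<le> l1 (f x) * (\<Prod>i\<in>F. l1 (f i))"
    using insert by (simp add: mult_left_mono l1_nonneg)
  finally show ?case using insert by simp
qed auto

lemma l1_lin: "l1 [:-b, 1:] = 1 + norm b"
  by (simp add: l1_pCons)

lemma l1_monom: "l1 (monom a d) = norm a"
proof -
  have "l1 (monom a d) = (\<Sum>i\<le>d. norm (coeff (monom a d) i))"
    by (rule l1_ext) (simp add: degree_monom_le)
  also have "\<dots> = (\<Sum>i\<le>d. if i = d then norm a else 0)"
    by (intro sum.cong) (auto simp: coeff_monom)
  also have "\<dots> = norm a"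
    by (simp add: sum.delta)
  finally show ?thesis .
qed

lemma l1_ofnat_mult: "l1 (of_nat n * p) = of_nat n * l1 p"
  by (simp add: of_nat_poly l1_smult)

lemma Tk_lin: "Tk [:-b, 1:] [:s:] k c 1 = [:\<Prod>j<k. (c - of_nat j + s):]"
proof -
  have d: "pderiv [:-b, 1:] = 1" by (simp add: pderiv_pCons)
  show ?thesis by (induction k) (simp_all add: Top_def algebra_simps d)
qed

lemma Tk_one: "Tk 1 0 k c G = (pderiv ^^ k) G"
  by (induction k) (simp_all add: Top_def)

lemma pderiv_iter_monom: "(pderiv ^^ k) (monom (1::complex) l) = monom (of_nat (fact k * (l choose k))) (l - k)"
proof (induction k)
  case (Suc k)
  have e: "(l - k) * (fact k * (l choose k)) = fact (Suc k) * (l choose Suc k)"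
  proof -
    have "(l - k) * (l choose k) = Suc k * (l choose Suc k)"
      using binomial_absorb_comp[of l k] binomial_absorption[of k l] by simp
    then show ?thesis by (simp add: algebra_simps)
  qed
  have "(pderiv ^^ Suc k) (monom (1::complex) l) = monom (of_nat ((l - k) * (fact k * (l choose k)))) (l - k - 1)"
  proof -
    have "(pderiv ^^ Suc k) (monom (1::complex) l) = pderiv (monom (of_nat (fact k * (l choose k))) (l - k))"
      by (simp only: funpow.simps comp_apply Suc.IH)
    then show ?thesis by (simp add: pderiv_monom)
  qed
  also have "\<dots> = monom (of_nat (fact (Suc k) * (l choose Suc k))) (l - Suc k)"
    by (subst e) simp
  finally show ?case .
qed simp

lemma lin_bound:
  assumes "k \<le> n" "norm s \<le> real S"
  shows "norm (\<Prod>j<k. (of_nat n - of_nat j + s :: complex)) \<le> fact k * 2 ^ (n + S)"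
proof -
  have "norm (\<Prod>j<k. (of_nat n - of_nat j + s :: complex)) = (\<Prod>j<k. norm (of_nat n - of_nat j + s :: complex))"
    by (simp add: prod_norm)
  also have "\<dots> \<le> (\<Prod>j<k. real (n + S) - real j)"
  proof (rule prod_mono)
    fix j assume "j \<in> {..<k}"
    then have "j \<le> n" using assms by simp
    then have eq: "(of_nat n - of_nat j :: complex) = of_nat (n - j)" by (simp add: of_nat_diff)
    have nj: "norm (of_nat n - of_nat j :: complex) = real (n - j)"
      by (subst eq) (rule norm_of_nat)
    then have "norm (of_nat n - of_nat j + s :: complex) \<le> norm (of_nat (n - j) :: complex) + norm s"
      using norm_triangle_ineq[of "of_nat n - of_nat j :: complex" s] by simp
    also have "\<dots> \<le> real (n + S) - real j" using assms \<open>j \<le> n\<close> nj by (simp add: of_nat_diff)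
    finally show "0 \<le> norm (of_nat n - of_nat j + s :: complex) \<and> norm (of_nat n - of_nat j + s :: complex) \<le> real (n + S) - real j"
      by simp
  qed
  also have "\<dots> = fact k * real ((n + S) choose k)"
  proof -
    have g1: "fact k * (real (n+S) gchoose k) = (\<Prod>i=0..<k. real (n+S) - of_nat i)" by (rule gbinomial_mult_fact)
    have g2: "real ((n+S) choose k) = real (n+S) gchoose k" by (rule binomial_gbinomial)
    show ?thesis unfolding g2 g1 atLeast0LessThan by simp
  qed
  also have "\<dots> \<le> fact k * 2 ^ (n + S)"
  proof -
    have "real ((n+S) choose k) \<le> real (2 ^ (n+S))" using binomial_le_pow2[of "n+S" k] by (rule of_nat_mono)
    then show ?thesis by (intro mult_left_mono) simp_all
  qed
  finally show ?thesis .
qed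

definition Ar :: "(nat \<Rightarrow> complex) \<Rightarrow> nat \<Rightarrow> complex poly" where
  "Ar \<beta> r = (\<Prod>i<r. [:-\<beta> i, 1:])"

definition Br :: "(nat \<Rightarrow> complex) \<Rightarrow> (nat \<Rightarrow> complex) \<Rightarrow> nat \<Rightarrow> complex poly" where
  "Br \<beta> s r = (\<Sum>i<r. smult (s i) (\<Prod>j\<in>{..<r}-{i}. [:-\<beta> j, 1:]))"

lemma Ar_Suc: "Ar \<beta> (Suc r) = Ar \<beta> r * [:-\<beta> r, 1:]"
  by (simp add: Ar_def)

lemma Br_Suc: "Br \<beta> s (Suc r) = Br \<beta> s r * [:-\<beta> r, 1:] + Ar \<beta> r * [:s r:]"
proof -
  have a: "{..<Suc r} - {r} = {..<r}" by auto
  have b: "(\<Prod>j\<in>{..<Suc r}-{i}. [:-\<beta> j, 1:]) = [:-\<beta> r, 1:] * (\<Prod>j\<in>{..<r}-{i}. [:-\<beta> j, 1:])"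
    if "i < r" for i
  proof -
    have "{..<Suc r} - {i} = insert r ({..<r} - {i})" using that by auto
    then show ?thesis by simp
  qed
  have "Br \<beta> s (Suc r) = (\<Sum>i<r. smult (s i) (\<Prod>j\<in>{..<Suc r}-{i}. [:-\<beta> j, 1:])) + smult (s r) (Ar \<beta> r)"
    unfolding Br_def Ar_def by (simp add: a)
  also have "(\<Sum>i<r. smult (s i) (\<Prod>j\<in>{..<Suc r}-{i}. [:-\<beta> j, 1:])) = Br \<beta> s r * [:-\<beta> r, 1:]"
    unfolding Br_def sum_distrib_right by (intro sum.cong) (simp_all add: b algebra_simps)
  finally show ?thesis by (simp add: algebra_simps)
qed

lemma l1_mult4: "l1 (a * b * c * d) \<le> l1 a * l1 b * l1 c * l1 d"
proof -
  have "l1 (a * b * c * d) \<le> l1 (a * b * c) * l1 d" by (rule l1_mult)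
  also have "\<dots> \<le> (l1 (a * b) * l1 c) * l1 d" by (intro mult_right_mono l1_mult l1_nonneg)
  also have "\<dots> \<le> (l1 a * l1 b * l1 c) * l1 d" by (intro mult_right_mono l1_mult l1_nonneg mult_nonneg_nonneg)
  finally show ?thesis .
qed

lemma mult_mono4:
  fixes x1 x2 x3 x4 y1 y2 y3 y4 :: real
  assumes "0 \<le> x1" "x1 \<le> y1" "0 \<le> x2" "x2 \<le> y2" "0 \<le> x3" "x3 \<le> y3" "0 \<le> x4" "x4 \<le> y4"
  shows "x1 * x2 * x3 * x4 \<le> y1 * y2 * y3 * y4"
  using assms by (intro mult_mono) (auto intro: mult_nonneg_nonneg order_trans[OF _ mult_mono])

lemma l1_Ar: "l1 (Ar \<beta> r) \<le> (\<Prod>i<r. 1 + norm (\<beta> i))"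
  unfolding Ar_def using l1_prod[of "\<lambda>i. [:-\<beta> i, 1:]" "{..<r}"] by (simp add: l1_lin)

lemma Tk_bound:
  assumes "\<forall>i<r. norm (s i) \<le> real S" "k \<le> n"
  shows "l1 (Tk (Ar \<beta> r) (Br \<beta> s r) k (of_nat n) (monom 1 l))
     \<le> fact k * real (Suc k) ^ r * 2 ^ l * (\<Prod>i<r. 2 ^ (n + S) * (1 + norm (\<beta> i)) ^ k)"
  using assms
proof (induction r arbitrary: k)
  case 0
  have t0: "Tk (Ar \<beta> 0) (Br \<beta> s 0) k (of_nat n) (monom 1 l) = monom (of_nat (fact k * (l choose k))) (l-k)"
    by (simp add: Ar_def Br_def Tk_one pderiv_iter_monom)
  have "l1 (Tk (Ar \<beta> 0) (Br \<beta> s 0) k (of_nat n) (monom 1 l)) = real (fact k * (l choose k))"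
    unfolding t0 l1_monom by (rule norm_of_nat)
  also have "\<dots> = fact k * real (l choose k)" by simp
  also have "\<dots> \<le> fact k * 2 ^ l"
  proof -
    have "real (l choose k) \<le> real (2 ^ l)" using binomial_le_pow2[of l k] by (rule of_nat_mono)
    then show ?thesis by (intro mult_left_mono) simp_all
  qed
  finally show ?case by simp
next
  case (Suc r)
  define c :: complex where "c = of_nat n"
  define L where "L = [:-\<beta> r, 1:]"
  define N where "N = n + S"
  define Q where "Q = (\<Prod>i<r. 1 + norm (\<beta> i))"
  define b where "b = 1 + norm (\<beta> r)"
  define W where "W j = (\<Prod>i<r. 2 ^ N * (1 + norm (\<beta> i)) ^ j)" for j
  define M where "M = fact k * real (Suc k) ^ r * 2 ^ l * W k * (2 ^ N * b ^ k)"
  have Q0: "0 \<le> Q" unfolding Q_def by (intro prod_nonneg) auto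
  have b0: "1 \<le> b" unfolding b_def by simp
  have W0: "0 \<le> W j" for j unfolding W_def by (intro prod_nonneg) auto
  have WQ: "W j * Q ^ (k - j) = W k" if "j \<le> k" for j
  proof -
    have "W j * Q ^ (k - j) = (\<Prod>i<r. 2 ^ N * (1 + norm (\<beta> i)) ^ j * (1 + norm (\<beta> i)) ^ (k - j))"
      unfolding W_def Q_def by (simp add: prod.distrib prod_power_distrib)
    also have "\<dots> = W k" unfolding W_def
      by (intro prod.cong refl) (simp add: mult.assoc power_add[symmetric] that)
    finally show ?thesis .
  qed
  have decomp: "Tk (Ar \<beta> (Suc r)) (Br \<beta> s (Suc r)) k c (monom 1 l) =
     (\<Sum>j\<le>k. of_nat (k choose j) * (Ar \<beta> r ^ (k-j) * Tk (Ar \<beta> r) (Br \<beta> s r) j c (monom 1 l) * L ^ j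
        * [:\<Prod>i<k-j. (c - of_nat i + s r):]))"
    unfolding Ar_Suc Br_Suc L_def using Tk_prod[of "Ar \<beta> r" "[:-\<beta> r, 1:]" "Br \<beta> s r" "[:s r:]" k c "monom 1 l" 1]
    by (simp add: Tk_lin)
  have trm: "real (k choose j) * l1 (Ar \<beta> r ^ (k-j) * Tk (Ar \<beta> r) (Br \<beta> s r) j c (monom 1 l) * L ^ j
        * [:\<Prod>i<k-j. (c - of_nat i + s r):]) \<le> M" if "j \<le> k" for j
  proof -
    have "l1 (Ar \<beta> r ^ (k-j) * Tk (Ar \<beta> r) (Br \<beta> s r) j c (monom 1 l) * L ^ j
        * [:\<Prod>i<k-j. (c - of_nat i + s r):]) \<le>
        l1 (Ar \<beta> r ^ (k-j)) * l1 (Tk (Ar \<beta> r) (Br \<beta> s r) j c (monom 1 l)) * l1 (L ^ j)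
        * l1 [:\<Prod>i<k-j. (c - of_nat i + s r):]" by (rule l1_mult4)
    also have "\<dots> \<le> Q ^ (k - j) * (fact j * real (Suc j) ^ r * 2 ^ l * W j) * b ^ j * (fact (k - j) * 2 ^ N)"
    proof (rule mult_mono4)
      show "l1 (Ar \<beta> r ^ (k-j)) \<le> Q ^ (k - j)"
        using l1_power[of "Ar \<beta> r" "k-j"] power_mono[OF l1_Ar[of \<beta> r] l1_nonneg, of "k-j"]
        unfolding Q_def by linarith
      show "l1 (Tk (Ar \<beta> r) (Br \<beta> s r) j c (monom 1 l)) \<le> fact j * real (Suc j) ^ r * 2 ^ l * W j"
        using Suc.IH[of j] Suc.prems that unfolding c_def W_def N_def by simp
      show "l1 (L ^ j) \<le> b ^ j"
        using l1_power[of L j] unfolding L_def b_def l1_lin by (simp add: add.commute)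
      show "l1 [:\<Prod>i<k-j. (c - of_nat i + s r):] \<le> fact (k - j) * 2 ^ N"
        using lin_bound[of "k-j" n "s r" S] Suc.prems unfolding c_def N_def by simp
    qed (simp_all add: l1_nonneg)
    finally have A: "l1 (Ar \<beta> r ^ (k-j) * Tk (Ar \<beta> r) (Br \<beta> s r) j c (monom 1 l) * L ^ j
        * [:\<Prod>i<k-j. (c - of_nat i + s r):]) \<le> Q ^ (k - j) * (fact j * real (Suc j) ^ r * 2 ^ l * W j) * b ^ j * (fact (k - j) * 2 ^ N)" .
    have B: "real (k choose j) * (Q ^ (k - j) * (fact j * real (Suc j) ^ r * 2 ^ l * W j) * b ^ j * (fact (k - j) * 2 ^ N))
       = (real (k choose j) * fact j * fact (k - j)) * real (Suc j) ^ r * 2 ^ l * (W j * Q ^ (k - j)) * (2 ^ N * b ^ j)"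
      by (simp add: algebra_simps)
    have C: "real (k choose j) * fact j * fact (k - j) = fact k"
      using binomial_fact_lemma[OF that] by (metis (mono_tags, lifting) mult.commute mult.left_commute of_nat_fact of_nat_mult)
    have D: "real (Suc j) ^ r \<le> real (Suc k) ^ r" using that by (intro power_mono) auto
    have E: "b ^ j \<le> b ^ k" using that b0 by (intro power_increasing) auto
    have "real (k choose j) * l1 (Ar \<beta> r ^ (k-j) * Tk (Ar \<beta> r) (Br \<beta> s r) j c (monom 1 l) * L ^ j
        * [:\<Prod>i<k-j. (c - of_nat i + s r):]) \<le> fact k * real (Suc j) ^ r * 2 ^ l * W k * (2 ^ N * b ^ j)"
      using mult_left_mono[OF A, of "real (k choose j)"] unfolding B C WQ[OF that] by simp
    also have "\<dots> \<le> M" unfolding M_def using D E W0[of k] b0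
      by (intro mult_mono mult_nonneg_nonneg) auto
    finally show ?thesis .
  qed
  have "l1 (Tk (Ar \<beta> (Suc r)) (Br \<beta> s (Suc r)) k c (monom 1 l)) \<le>
     (\<Sum>j\<le>k. l1 (of_nat (k choose j) * (Ar \<beta> r ^ (k-j) * Tk (Ar \<beta> r) (Br \<beta> s r) j c (monom 1 l) * L ^ j
        * [:\<Prod>i<k-j. (c - of_nat i + s r):])))"
    unfolding decomp by (rule l1_sum)
  also have "\<dots> \<le> (\<Sum>j\<le>k. M)"
  proof (intro sum_mono)
    fix j assume "j \<in> {..k}"
    then show "l1 (of_nat (k choose j) * (Ar \<beta> r ^ (k-j) * Tk (Ar \<beta> r) (Br \<beta> s r) j c (monom 1 l) * L ^ j
        * [:\<Prod>i<k-j. (c - of_nat i + s r):])) \<le> M"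
      unfolding l1_ofnat_mult using trm[of j] by simp
  qed
  also have "\<dots> = fact k * real (Suc k) ^ Suc r * 2 ^ l * (\<Prod>i<Suc r. 2 ^ (n + S) * (1 + norm (\<beta> i)) ^ k)"
    unfolding M_def W_def N_def b_def by (simp add: algebra_simps)
  finally show ?case unfolding c_def .
qed

lemma ge1_mult: "1 \<le> (x::real) \<Longrightarrow> 1 \<le> y \<Longrightarrow> 1 \<le> x * y"
  using mult_mono[of 1 x 1 y] by simp

lemma poly_prod_lin_vanish:
  fixes \<beta> :: "nat \<Rightarrow> complex"
  assumes "finite S" "i \<in> S"
  shows "poly (\<Prod>j\<in>S. [:-\<beta> j, 1:]) (\<beta> i) = 0"
proof -
  have "(\<Prod>j\<in>S. poly [:-\<beta> j, 1:] (\<beta> i)) = 0"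
    using assms by (intro prod_zero) (auto intro!: bexI[of _ i])
  then show ?thesis by (simp add: poly_prod)
qed

lemma poly_pderiv_Ar:
  assumes "i < m"
  shows "poly (pderiv (Ar \<beta> m)) (\<beta> i) = poly (\<Prod>j\<in>{..<m}-{i}. [:-\<beta> j, 1:]) (\<beta> i)"
proof -
  have "pderiv (Ar \<beta> m) = (\<Sum>a\<in>{..<m}. (\<Prod>j\<in>{..<m}-{a}. [:-\<beta> j, 1:]))"
    unfolding Ar_def pderiv_prod by (simp add: pderiv_pCons)
  then have "poly (pderiv (Ar \<beta> m)) (\<beta> i) = (\<Sum>a\<in>{..<m}. poly (\<Prod>j\<in>{..<m}-{a}. [:-\<beta> j, 1:]) (\<beta> i))"
    by (simp add: poly_sum)
  also have "\<dots> = (\<Sum>a\<in>{..<m}. if a = i then poly (\<Prod>j\<in>{..<m}-{i}. [:-\<beta> j, 1:]) (\<beta> i) else 0)"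
  proof (intro sum.cong refl)
    fix a assume "a \<in> {..<m}"
    show "poly (\<Prod>j\<in>{..<m}-{a}. [:-\<beta> j, 1:]) (\<beta> i) = (if a = i then poly (\<Prod>j\<in>{..<m}-{i}. [:-\<beta> j, 1:]) (\<beta> i) else 0)"
      using assms by (auto intro: poly_prod_lin_vanish)
  qed
  also have "\<dots> = poly (\<Prod>j\<in>{..<m}-{i}. [:-\<beta> j, 1:]) (\<beta> i)"
    using assms by (simp add: sum.delta)
  finally show ?thesis .
qed

lemma poly_Br:
  assumes "i < m"
  shows "poly (Br \<beta> s m) (\<beta> i) = s i * poly (\<Prod>j\<in>{..<m}-{i}. [:-\<beta> j, 1:]) (\<beta> i)"
proof -
  have "poly (Br \<beta> s m) (\<beta> i) = (\<Sum>a\<in>{..<m}. s a * poly (\<Prod>j\<in>{..<m}-{a}. [:-\<beta> j, 1:]) (\<beta> i))"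
    unfolding Br_def by (simp add: poly_sum)
  also have "\<dots> = (\<Sum>a\<in>{..<m}. if a = i then s i * poly (\<Prod>j\<in>{..<m}-{i}. [:-\<beta> j, 1:]) (\<beta> i) else 0)"
  proof (intro sum.cong refl)
    fix a assume "a \<in> {..<m}"
    show "s a * poly (\<Prod>j\<in>{..<m}-{a}. [:-\<beta> j, 1:]) (\<beta> i) = (if a = i then s i * poly (\<Prod>j\<in>{..<m}-{i}. [:-\<beta> j, 1:]) (\<beta> i) else 0)"
      using assms by (auto intro: poly_prod_lin_vanish)
  qed
  also have "\<dots> = s i * poly (\<Prod>j\<in>{..<m}-{i}. [:-\<beta> j, 1:]) (\<beta> i)"
    using assms by (simp add: sum.delta)
  finally show ?thesis .
qed

lemma degree_Br: "degree (Br \<beta> s m) \<le> m - 1"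
proof -
  have "degree (smult (s i) (\<Prod>j\<in>{..<m}-{i}. [:-\<beta> j, 1:])) \<le> m - 1" if im: "i < m" for i
  proof -
    have "degree (\<Prod>j\<in>{..<m}-{i}. [:-\<beta> j, 1:]) \<le> (\<Sum>j\<in>{..<m}-{i}. degree [:-\<beta> j, 1:])"
      using degree_prod_sum_le[of "{..<m}-{i}" "\<lambda>j. [:-\<beta> j, 1:]"] by (simp add: o_def)
    also have "\<dots> = card ({..<m}-{i})" by simp
    also have "\<dots> \<le> m - 1" using im by (simp add: card_Diff_singleton)
    finally show ?thesis using degree_smult_le order_trans by blast
  qed
  then show ?thesis unfolding Br_def by (intro degree_sum_le) auto
qed

lemma poly_prod_others_nz:
  fixes \<beta> :: "nat \<Rightarrow> complex"
  assumes "inj_on \<beta> {..<m}" "i < m"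
  shows "poly (\<Prod>j\<in>{..<m}-{i}. [:-\<beta> j, 1:]) (\<beta> i) \<noteq> 0"
proof -
  have "(\<Prod>j\<in>{..<m}-{i}. poly [:-\<beta> j, 1:] (\<beta> i)) \<noteq> 0"
  proof (subst prod_zero_iff)
    show "finite ({..<m}-{i})" by simp
    show "\<not> (\<exists>j\<in>{..<m}-{i}. poly [:-\<beta> j, 1:] (\<beta> i) = 0)"
      using assms by (auto dest: inj_onD)
  qed
  then show ?thesis by (simp add: poly_prod)
qed

lemma Br_eq:
  fixes \<beta> :: "nat \<Rightarrow> complex"
  assumes "inj_on \<beta> {..<m}" "degree b < m" "m \<ge> 1"
  shows "Br \<beta> (\<lambda>i. poly b (\<beta> i) / poly (pderiv (Ar \<beta> m)) (\<beta> i)) m = b"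
proof (rule poly_eqI_degree[of "\<beta> ` {..<m}"])
  fix x assume "x \<in> \<beta> ` {..<m}"
  then obtain i where i: "i < m" "x = \<beta> i" by auto
  show "poly (Br \<beta> (\<lambda>i. poly b (\<beta> i) / poly (pderiv (Ar \<beta> m)) (\<beta> i)) m) x = poly b x"
    unfolding i(2) poly_Br[OF i(1)] poly_pderiv_Ar[OF i(1)]
    using poly_prod_others_nz[OF assms(1) i(1)] by simp
next
  have c: "card (\<beta> ` {..<m}) = m" using assms(1) by (simp add: card_image)
  show "degree (Br \<beta> (\<lambda>i. poly b (\<beta> i) / poly (pderiv (Ar \<beta> m)) (\<beta> i)) m) < card (\<beta> ` {..<m})"
    unfolding c by (rule le_less_trans[OF degree_Br]) (use assms(3) in linarith)
  show "degree b < card (\<beta> ` {..<m})" unfolding c by (rule assms(2))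
qed

lemma diff_op_iter:
  assumes "k \<le> n" "poly a z \<noteq> 0"
  shows "(diff_op a b ^^ k) (\<lambda>z. poly a z ^ n * z ^ l) z = poly (a^(n-k) * Tk a b k (of_nat n) (monom 1 l)) z"
  using assms
proof (induction k arbitrary: z)
  case 0
  then show ?case by (simp add: poly_monom)
next
  case (Suc k)
  define G where "G = Tk a b k (of_nat n) (monom 1 l)"
  define N1 where "N1 = n - Suc k"
  have nk: "n - k = Suc N1" using Suc.prems unfolding N1_def by simp
  have ck: "(of_nat n - of_nat k :: complex) = of_nat (Suc N1)" using Suc.prems unfolding N1_def by (simp add: of_nat_diff)
  have ev: "eventually (\<lambda>w. poly a w \<noteq> 0) (nhds z)"
  proof -
    have "isCont (poly a) z" by simp
    then have "(poly a \<longlongrightarrow> poly a z) (nhds z)" by (simp add: tendsto_nhds_iff isCont_def)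
    then show ?thesis using tendsto_imp_eventually_ne[OF _ Suc.prems(2)] by blast
  qed
  have ev2: "eventually (\<lambda>w. (diff_op a b ^^ k) (\<lambda>z. poly a z ^ n * z ^ l) w = poly (a^(n-k) * G) w) (nhds z)"
  proof (rule eventually_mono[OF ev])
    fix w assume "poly a w \<noteq> 0"
    show "(diff_op a b ^^ k) (\<lambda>z. poly a z ^ n * z ^ l) w = poly (a^(n-k) * G) w"
      using Suc.IH[OF Suc_leD[OF Suc.prems(1)] \<open>poly a w \<noteq> 0\<close>] unfolding G_def .
  qed
  have d: "deriv ((diff_op a b ^^ k) (\<lambda>z. poly a z ^ n * z ^ l)) z = poly (pderiv (a^(n-k) * G)) z"
    by (rule trans[OF deriv_cong_ev[OF ev2 refl]]) (rule DERIV_imp_deriv[OF poly_DERIV])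
  have "(diff_op a b ^^ Suc k) (\<lambda>z. poly a z ^ n * z ^ l) z
      = poly (pderiv (a^(n-k) * G)) z + poly b z / poly a z * poly (a^(n-k) * G) z"
  proof -
    have ih: "(diff_op a b ^^ k) (\<lambda>z. poly a z ^ n * z ^ l) z = poly (a^(n-k) * G) z"
      using Suc.IH[of z] Suc.prems unfolding G_def by simp
    have "(diff_op a b ^^ Suc k) (\<lambda>z. poly a z ^ n * z ^ l) z = diff_op a b ((diff_op a b ^^ k) (\<lambda>z. poly a z ^ n * z ^ l)) z"
      by simp
    also have "\<dots> = deriv ((diff_op a b ^^ k) (\<lambda>z. poly a z ^ n * z ^ l)) z + poly b z / poly a z * (diff_op a b ^^ k) (\<lambda>z. poly a z ^ n * z ^ l) z"
      by (simp only: diff_op_def)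
    finally show ?thesis unfolding d ih .
  qed
  also have "\<dots> = poly (a^(n - Suc k) * Tk a b (Suc k) (of_nat n) (monom 1 l)) z"
    using Suc.prems(2)
  proof -
    have p1: "poly (pderiv (a^Suc N1 * G)) z = poly a z * poly a z ^ N1 * poly (pderiv G) z + poly G z * (of_nat (Suc N1) * poly a z ^ N1 * poly (pderiv a) z)"
      unfolding pderiv_mult pderiv_power_Suc by (simp only: poly_add poly_mult poly_smult poly_power power_Suc)
    have p2: "poly (a^N1 * (smult (of_nat (Suc N1)) (pderiv a * G) + a * pderiv G + b * G)) z = poly a z ^ N1 * (of_nat (Suc N1) * (poly (pderiv a) z * poly G z) + poly a z * poly (pderiv G) z + poly b z * poly G z)"
      by (simp only: poly_add poly_mult poly_smult poly_power)
    have p3: "poly (a^Suc N1 * G) z = poly a z * poly a z ^ N1 * poly G z"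
      by (simp only: poly_mult poly_power power_Suc)
    have bx: "poly b z / poly a z * (poly a z * poly a z ^ N1 * poly G z) = poly b z * poly a z ^ N1 * poly G z"
      using Suc.prems(2) by simp
    show ?thesis unfolding nk N1_def[symmetric] Tk.simps G_def[symmetric] ck Top_def p1 p2 p3 bx by (simp add: algebra_simps)
  qed
  finally show ?case .
qed

lemma P_poly_eq:
  assumes "a \<noteq> 0"
  shows "P_poly a b n l = smult (1 / fact n) (Tk a b n (of_nat n) (monom 1 l))"
  unfolding P_poly_def
proof (rule the_equality)
  show "\<forall>z. poly a z \<noteq> 0 \<longrightarrow> poly (smult (1 / fact n) (Tk a b n (of_nat n) (monom 1 l))) z =
      (diff_op a b ^^ n) (\<lambda>z. poly a z ^ n * z ^ l) z / fact n"
    using diff_op_iter[of n n a _ b l] by simp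
next
  fix p assume p: "\<forall>z. poly a z \<noteq> 0 \<longrightarrow> poly p z = (diff_op a b ^^ n) (\<lambda>z. poly a z ^ n * z ^ l) z / fact n"
  define q where "q = smult (1 / fact n) (Tk a b n (of_nat n) (monom 1 l))"
  have pq: "poly p z = poly q z" if "poly a z \<noteq> 0" for z
    using p that diff_op_iter[of n n a z b l] unfolding q_def by simp
  show "p = q"
  proof (rule ccontr)
    assume "p \<noteq> q"
    then have "p - q \<noteq> 0" by simp
    then have f1: "finite {z. poly (p - q) z = 0}" by (rule poly_roots_finite)
    have f2: "finite {z. poly a z = 0}" using assms by (rule poly_roots_finite)
    have "UNIV \<subseteq> {z. poly (p - q) z = 0} \<union> {z. poly a z = 0}" using pq by auto
    then have "finite (UNIV :: complex set)" using f1 f2 finite_subset by blast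
    then show False using infinite_UNIV_char_0 by blast
  qed
qed

locale emb =
  fixes K :: "complex set" and \<iota> :: "complex \<Rightarrow> complex"
  assumes nf: "number_field K" and fe: "field_embedding K \<iota>"
begin

lemma K0: "0 \<in> K" and K1: "1 \<in> K"
  and Kadd: "x \<in> K \<Longrightarrow> y \<in> K \<Longrightarrow> x + y \<in> K"
  and Kdiff: "x \<in> K \<Longrightarrow> y \<in> K \<Longrightarrow> x - y \<in> K"
  and Kmult: "x \<in> K \<Longrightarrow> y \<in> K \<Longrightarrow> x * y \<in> K"
  and Kinv: "x \<in> K \<Longrightarrow> inverse x \<in> K"
  using nf unfolding number_field_def by (auto simp del: inverse_nonzero_iff_nonzero)

lemma iadd: "x \<in> K \<Longrightarrow> y \<in> K \<Longrightarrow> \<iota> (x + y) = \<iota> x + \<iota> y"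
  and imult: "x \<in> K \<Longrightarrow> y \<in> K \<Longrightarrow> \<iota> (x * y) = \<iota> x * \<iota> y"
  and i1: "\<iota> 1 = 1"
  using fe unfolding field_embedding_def by auto

lemma i0: "\<iota> 0 = 0"
  using iadd[OF K0 K0] by simp

lemma Kneg: "x \<in> K \<Longrightarrow> -x \<in> K"
  using Kdiff[OF K0] by fastforce

lemma ineg: "x \<in> K \<Longrightarrow> \<iota> (-x) = - \<iota> x"
proof -
  assume x: "x \<in> K"
  have "\<iota> x + \<iota> (-x) = 0" using iadd[OF x Kneg[OF x]] i0 by simp
  then show ?thesis by (simp add: add_eq_0_iff)
qed

lemma idiff: "x \<in> K \<Longrightarrow> y \<in> K \<Longrightarrow> \<iota> (x - y) = \<iota> x - \<iota> y"
  using iadd[of x "-y"] Kneg ineg by simp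

lemma Knat: "of_nat k \<in> K"
  by (induction k) (simp_all add: K0 K1 Kadd[OF K1])

lemma inat: "\<iota> (of_nat k) = of_nat k"
proof (induction k)
  case (Suc k)
  then show ?case using iadd[OF K1 Knat[of k]] i1 by simp
qed (simp add: i0)

lemma Knat1: "1 + of_nat k \<in> K" using Knat[of "Suc k"] by simp
lemma inat1: "\<iota> (1 + of_nat k) = 1 + of_nat k" using inat[of "Suc k"] by simp

lemma iinv: "x \<in> K \<Longrightarrow> \<iota> (inverse x) = inverse (\<iota> x)"
proof (cases "x = 0")
  case True then show ?thesis by (simp add: i0)
next
  case False
  assume x: "x \<in> K"
  have "\<iota> x * \<iota> (inverse x) = 1" using imult[OF x Kinv[OF x]] False i1 by simp
  then show ?thesis by (metis inverse_unique)
qed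

lemma iinj: "x \<in> K \<Longrightarrow> y \<in> K \<Longrightarrow> \<iota> x = \<iota> y \<Longrightarrow> x = y"
proof (rule ccontr)
  assume x: "x \<in> K" and y: "y \<in> K" and e: "\<iota> x = \<iota> y" and ne: "x \<noteq> y"
  have d: "x - y \<in> K" using x y by (rule Kdiff)
  have "\<iota> (x - y) = 0" using idiff[OF x y] e by simp
  moreover have "\<iota> (x - y) * \<iota> (inverse (x - y)) = 1"
    using imult[OF d Kinv[OF d]] ne i1 by simp
  ultimately show False by simp
qed

lemma Ksum: "(\<And>i. i \<in> S \<Longrightarrow> f i \<in> K) \<Longrightarrow> sum f S \<in> K \<and> \<iota> (sum f S) = (\<Sum>i\<in>S. \<iota> (f i))"
proof (induction S rule: infinite_finite_induct)
  case (insert x F)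
  then show ?case using Kadd iadd by simp
qed (simp_all add: K0 i0)

definition inK :: "complex poly \<Rightarrow> bool" where "inK p \<longleftrightarrow> (\<forall>k. coeff p k \<in> K)"

abbreviation mp :: "complex poly \<Rightarrow> complex poly" where "mp p \<equiv> map_poly \<iota> p"

lemma coeff_mp: "coeff (mp p) k = \<iota> (coeff p k)"
  by (rule coeff_map_poly) (rule i0)

lemma inK_add: "inK p \<Longrightarrow> inK q \<Longrightarrow> inK (p + q)"
  and mp_add: "inK p \<Longrightarrow> inK q \<Longrightarrow> mp (p + q) = mp p + mp q"
  unfolding inK_def by (auto intro!: poly_eqI simp: coeff_mp Kadd iadd)

lemma inK_mult: "inK p \<Longrightarrow> inK q \<Longrightarrow> inK (p * q)"
  and mp_mult: "inK p \<Longrightarrow> inK q \<Longrightarrow> mp (p * q) = mp p * mp q"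
  unfolding inK_def by (auto intro!: poly_eqI simp: coeff_mp coeff_mult Ksum Kmult imult)

lemma inK_smult: "c \<in> K \<Longrightarrow> inK p \<Longrightarrow> inK (smult c p)"
  and mp_smult: "c \<in> K \<Longrightarrow> inK p \<Longrightarrow> mp (smult c p) = smult (\<iota> c) (mp p)"
  unfolding inK_def by (auto intro!: poly_eqI simp: coeff_mp Kmult imult)

lemma inK_pderiv: "inK p \<Longrightarrow> inK (pderiv p)"
  and mp_pderiv: "inK p \<Longrightarrow> mp (pderiv p) = pderiv (mp p)"
  unfolding inK_def by (auto intro!: poly_eqI simp: coeff_mp coeff_pderiv Kmult imult Knat1 inat1)

lemma inK_pCons: "c \<in> K \<Longrightarrow> inK p \<Longrightarrow> inK (pCons c p)"
  unfolding inK_def by (auto simp: coeff_pCons split: nat.split)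

lemma inK_0: "inK 0" unfolding inK_def by (simp add: K0)

lemma inK_monom: "inK (monom 1 l)"
  and mp_monom: "mp (monom 1 l) = monom 1 l"
  unfolding inK_def by (auto intro!: poly_eqI simp: coeff_mp K0 K1 i0 i1)

lemma inK_Tk:
  assumes "inK A" "inK B" "c \<in> K" "inK G"
  shows "inK (Tk A B k c G) \<and> mp (Tk A B k c G) = Tk (mp A) (mp B) k (\<iota> c) (mp G)"
proof (induction k)
  case 0
  then show ?case using assms by simp
next
  case (Suc k)
  define T where "T = Tk A B k c G"
  have T: "inK T" "mp T = Tk (mp A) (mp B) k (\<iota> c) (mp G)" using Suc unfolding T_def by auto
  have ck: "c - of_nat k \<in> K" using assms(3) Knat by (rule Kdiff)
  have ick: "\<iota> (c - of_nat k) = \<iota> c - of_nat k" using idiff[OF assms(3) Knat] inat by simp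
  have i1: "inK (pderiv A * T)" using assms T by (intro inK_mult inK_pderiv)
  have i2: "inK (A * pderiv T)" using assms T by (intro inK_mult inK_pderiv)
  have i3: "inK (B * T)" using assms T by (intro inK_mult)
  have pA: "inK (pderiv A)" "inK (pderiv T)" using assms T by (simp_all add: inK_pderiv)
  have "inK (Tk A B (Suc k) c G)" unfolding Tk.simps T_def[symmetric] Top_def
    using ck i1 i2 i3 by (intro inK_add inK_smult)
  moreover have "mp (Tk A B (Suc k) c G) = Tk (mp A) (mp B) (Suc k) (\<iota> c) (mp G)"
    unfolding Tk.simps T_def[symmetric] Top_def T(2)[symmetric] ick[symmetric]
    using ck i1 i2 i3 assms T pA
    by (simp add: mp_add mp_smult mp_mult mp_pderiv inK_add inK_smult)
  ultimately show ?case by simp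
qed

lemma mp_lin: "x \<in> K \<Longrightarrow> mp [:-x, 1:] = [:-\<iota> x, 1:]"
  by (simp add: map_poly_pCons i0 i1 ineg)

lemma inK_lin: "x \<in> K \<Longrightarrow> inK [:-x, 1:]"
  by (intro inK_pCons inK_0 Kneg K1)

lemma mp_Ar:
  assumes "\<forall>i<r. \<alpha> i \<in> K"
  shows "inK (Ar \<alpha> r) \<and> mp (Ar \<alpha> r) = Ar (\<lambda>i. \<iota> (\<alpha> i)) r"
  using assms
proof (induction r)
  case 0
  then show ?case by (simp add: Ar_def inK_def K0 K1 coeff_1 i1)
next
  case (Suc r)
  have a: "\<alpha> r \<in> K" using Suc.prems by simp
  have ih: "inK (Ar \<alpha> r)" "mp (Ar \<alpha> r) = Ar (\<lambda>i. \<iota> (\<alpha> i)) r" using Suc by auto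
  have "inK (Ar \<alpha> r * [:-\<alpha> r, 1:])" using ih(1) inK_lin[OF a] by (rule inK_mult)
  moreover have "mp (Ar \<alpha> r * [:-\<alpha> r, 1:]) = mp (Ar \<alpha> r) * mp [:-\<alpha> r, 1:]"
    using ih(1) inK_lin[OF a] by (rule mp_mult)
  ultimately show ?case unfolding Ar_Suc ih(2) mp_lin[OF a] by simp
qed

lemma coeff_bound:
  assumes "m \<ge> 1" "\<forall>k. coeff b k \<in> K" "degree b \<le> m - 1" "a = (\<Prod>i<m. [:- \<alpha> i, 1:])"
    "\<forall>i<m. \<alpha> i \<in> K" "inj_on \<alpha> {..<m}"
  defines "\<beta> \<equiv> \<lambda>i. \<iota> (\<alpha> i)"
  defines "s \<equiv> \<lambda>i. poly (mp b) (\<beta> i) / poly (pderiv (Ar \<beta> m)) (\<beta> i)"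
  defines "S \<equiv> nat \<lceil>\<Sum>i<m. norm (s i)\<rceil>"
  shows "norm (\<iota> (coeff (P_poly a b n l) k)) \<le> real (Suc n) ^ m * 2 ^ l * (\<Prod>i<m. 2 ^ (n + S) * (1 + norm (\<beta> i)) ^ n)"
proof -
  have aA: "a = Ar \<alpha> m" using assms(4) by (simp add: Ar_def)
  have a0: "a \<noteq> 0" unfolding aA Ar_def by simp
  define T where "T = Tk a b n (of_nat n) (monom 1 l)"
  have P: "P_poly a b n l = smult (1 / fact n) T" unfolding T_def by (rule P_poly_eq[OF a0])
  have inKa: "inK a" and mpa: "mp a = Ar \<beta> m" using mp_Ar[of m \<alpha>] assms(5) unfolding aA \<beta>_def by auto
  have inKb: "inK b" using assms(2) by (simp add: inK_def)
  have TT: "inK T \<and> mp T = Tk (mp a) (mp b) n (\<iota> (of_nat n)) (mp (monom 1 l))"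
    unfolding T_def by (rule inK_Tk[OF inKa inKb Knat inK_monom])
  have injb: "inj_on \<beta> {..<m}"
    using assms(5,6) iinj unfolding \<beta>_def inj_on_def by auto
  have degb: "degree (mp b) < m"
  proof -
    have "degree (mp b) \<le> degree b"
      by (rule degree_le) (simp add: coeff_mp coeff_eq_0 i0)
    then show ?thesis using assms(1,3) by linarith
  qed
  have mpb: "mp b = Br \<beta> s m" unfolding s_def using Br_eq[OF injb degb assms(1)] by simp
  have mpT: "mp T = Tk (Ar \<beta> m) (Br \<beta> s m) n (of_nat n) (monom 1 l)"
    using TT by (simp add: mpa mpb inat mp_monom)
  have fK: "1 / fact n \<in> K" and fi: "\<iota> (1 / fact n) = 1 / fact n"
  proof -
    have e: "(1 / fact n :: complex) = inverse (of_nat (fact n))" by (simp add: divide_inverse)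
    show "1 / fact n \<in> K" unfolding e by (rule Kinv[OF Knat])
    show "\<iota> (1 / fact n) = 1 / fact n" unfolding e iinv[OF Knat] inat by simp
  qed
  have cT: "coeff T k \<in> K" using TT by (simp add: inK_def)
  have "\<iota> (coeff (P_poly a b n l) k) = \<iota> (1 / fact n * coeff T k)" unfolding P by simp
  also have "\<dots> = 1 / fact n * coeff (mp T) k" by (simp only: imult[OF fK cT] fi coeff_mp)
  also have "norm \<dots> \<le> 1 / fact n * l1 (mp T)"
    by (simp add: norm_mult norm_divide coeff_le_l1 divide_right_mono)
  also have "\<dots> \<le> 1 / fact n * (fact n * real (Suc n) ^ m * 2 ^ l * (\<Prod>i<m. 2 ^ (n + S) * (1 + norm (\<beta> i)) ^ n))"
  proof (intro mult_left_mono)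
    have "\<forall>i<m. norm (s i) \<le> real S"
    proof (intro allI impI)
      fix i assume "i < m"
      then have "norm (s i) \<le> (\<Sum>i<m. norm (s i))"
        by (intro member_le_sum) auto
      also have "\<dots> \<le> real S" unfolding S_def by linarith
      finally show "norm (s i) \<le> real S" .
    qed
    then show "l1 (mp T) \<le> fact n * real (Suc n) ^ m * 2 ^ l * (\<Prod>i<m. 2 ^ (n + S) * (1 + norm (\<beta> i)) ^ n)"
      unfolding mpT by (intro Tk_bound) auto
  qed simp
  also have "\<dots> = real (Suc n) ^ m * 2 ^ l * (\<Prod>i<m. 2 ^ (n + S) * (1 + norm (\<beta> i)) ^ n)"
    by simp
  finally show ?thesis .
qed

end

theorem lemma4p11:
  fixes K :: "complex set" and \<iota> :: "complex \<Rightarrow> complex"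
    and m :: nat and a b :: "complex poly" and \<alpha> :: "nat \<Rightarrow> complex"
  assumes "m \<ge> 2"
    and "number_field K"
    and "field_embedding K \<iota>"
    and "\<forall>k. coeff a k \<in> K" and "\<forall>k. coeff b k \<in> K"
    and "degree a = m" and "lead_coeff a = 1"
    and "degree b \<le> m - 1"
    and "a = (\<Prod>i<m. [:- \<alpha> i, 1:])"
    and "\<forall>i<m. \<alpha> i \<in> K"
    and "inj_on \<alpha> {..<m}"
    and "\<forall>i<m. poly b (\<alpha> i) / poly (pderiv a) (\<alpha> i) \<in> \<rat>"
    and "\<forall>i<m. \<not> (\<exists>k::int. k \<le> -1 \<and> poly b (\<alpha> i) / poly (pderiv a) (\<alpha> i) = of_int k)"
    and "\<not> (\<exists>k::int. k < -1 \<and> coeff b (m - 1) = of_int k)"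
  shows "\<exists>g :: nat \<Rightarrow> real. ((\<lambda>n. g n / real n) \<longlongrightarrow> 0) sequentially \<and>
     (\<forall>\<^sub>F n in sequentially.
        ln (Max ((\<lambda>l. poly_norm_v K \<iota> (P_poly a b n l)) ` {0..m - 1}))
          \<le> real n * ((\<Sum>i<m. h_v K \<iota> (\<alpha> i)) + real m * ln (abs_v K \<iota> 4)) + g n)"
proof -
  interpret emb K \<iota> using assms(2,3) by unfold_locales
  have m1: "m \<ge> 1" using assms(1) by simp
  define \<beta> where "\<beta> = (\<lambda>i. \<iota> (\<alpha> i))"
  define s where "s = (\<lambda>i. poly (mp b) (\<beta> i) / poly (pderiv (Ar \<beta> m)) (\<beta> i))"
  define S where "S = nat \<lceil>\<Sum>i<m. norm (s i)\<rceil>"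
  define e where "e = real (local_degree K \<iota>) / real (nf_degree K)"
  have e0: "0 \<le> e" unfolding e_def by simp
  define B where "B n = real (Suc n) ^ m * 2 ^ m * (\<Prod>i<m. 2 ^ (n + S) * (1 + norm (\<beta> i)) ^ n)" for n
  have B1: "1 \<le> B n" for n
  proof -
    have "1 \<le> real (Suc n) ^ m" by simp
    moreover have "(1::real) \<le> 2 ^ m" by simp
    moreover have "1 \<le> (\<Prod>i<m. 2 ^ (n + S) * (1 + norm (\<beta> i)) ^ n :: real)"
 by (intro prod_ge_1 ge1_mult one_le_power) auto
    ultimately show ?thesis unfolding B_def by (intro ge1_mult)
  qed
  have cb: "norm (\<iota> (coeff (P_poly a b n l) k)) \<le> B n" if "l \<le> m - 1" for n l k
  proof -
    have "norm (\<iota> (coeff (P_poly a b n l) k)) \<le> real (Suc n) ^ m * 2 ^ l * (\<Prod>i<m. 2 ^ (n + S) * (1 + norm (\<beta> i)) ^ n)"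
      using coeff_bound[OF m1 assms(5) assms(8) assms(9) assms(10) assms(11), of n l k]
      unfolding \<beta>_def s_def S_def by simp
    also have "\<dots> \<le> B n" unfolding B_def
      using that by (intro mult_right_mono mult_left_mono power_increasing prod_nonneg) auto
    finally show ?thesis .
  qed
  have av: "abs_v K \<iota> (coeff (P_poly a b n l) k) \<le> B n powr e" if "l \<le> m - 1" for n l k
    unfolding abs_v_def e_def[symmetric] by (rule powr_mono2[OF e0 norm_ge_zero cb[OF that]])
  have pn: "poly_norm_v K \<iota> (P_poly a b n l) \<le> B n powr e" if "l \<le> m - 1" for n l
    unfolding poly_norm_v_def by (subst Max_le_iff) (auto intro: av[OF that])
  have pn0: "0 \<le> poly_norm_v K \<iota> p" for p
  proof -
    have "abs_v K \<iota> (coeff p 0) \<le> poly_norm_v K \<iota> p"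
      unfolding poly_norm_v_def by (rule Max_ge) auto
    moreover have "0 \<le> abs_v K \<iota> (coeff p 0)" unfolding abs_v_def by simp
    ultimately show ?thesis by linarith
  qed
  define Mx where "Mx n = Max ((\<lambda>l. poly_norm_v K \<iota> (P_poly a b n l)) ` {0..m - 1})" for n
  have Mx_le: "Mx n \<le> B n powr e" for n
    unfolding Mx_def by (subst Max_le_iff) (auto intro: pn)
  have Mx0: "0 \<le> Mx n" for n
  proof -
    have "poly_norm_v K \<iota> (P_poly a b n 0) \<le> Mx n"
      unfolding Mx_def by (rule Max_ge) auto
    then show ?thesis using pn0[of "P_poly a b n 0"] by linarith
  qed
  have lnMx: "ln (Mx n) \<le> e * ln (B n)" for n
  proof (cases "Mx n = 0")
    case True
    then show ?thesis using B1[of n] e0 by simp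
  next
    case False
    then have p1: "0 < Mx n" using Mx0[of n] by simp
    have p2: "0 < B n powr e" using B1[of n] by simp
    have "ln (Mx n) \<le> ln (B n powr e)" using Mx_le[of n] p1 p2 by (subst ln_le_cancel_iff) auto
    then show ?thesis by simp
  qed
  have nz: "1 + norm (\<beta> i) \<noteq> 0" for i by (smt (verit) norm_ge_zero)
  have lnB: "ln (B n) = real m * ln (real (Suc n)) + real m * ln 2 + (\<Sum>i<m. real (n+S) * ln 2 + real n * ln (1 + norm (\<beta> i)))" for n
    unfolding B_def by (simp add: ln_mult ln_prod ln_realpow nz)
  have hv: "h_v K \<iota> (\<alpha> i) = e * ln (max 1 (norm (\<beta> i)))" for i
  proof (cases "norm (\<beta> i) \<ge> 1")
    case True
    then have "1 \<le> norm (\<beta> i) powr e" using e0 by (simp add: ge_one_powr_ge_zero)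
    then show ?thesis using True unfolding h_v_def abs_v_def e_def[symmetric] \<beta>_def by simp
  next
    case False
    then have "norm (\<beta> i) powr e \<le> 1" using e0 by (simp add: powr_le1)
    then show ?thesis using False unfolding h_v_def abs_v_def e_def[symmetric] \<beta>_def by simp
  qed
  have l4: "ln (abs_v K \<iota> 4) = e * (2 * ln 2)"
  proof -
    have "\<iota> 4 = 4" using inat[of 4] by simp
    moreover have "ln (4::real) = 2 * ln 2"
      using ln_realpow[of 2 2] by simp
    ultimately show ?thesis unfolding abs_v_def e_def[symmetric] by simp
  qed
  have lnb: "ln (1 + norm (\<beta> i)) \<le> ln 2 + ln (max 1 (norm (\<beta> i)))" for i
  proof -
    have "1 + norm (\<beta> i) \<le> 2 * max 1 (norm (\<beta> i))" by simp
    then have "ln (1 + norm (\<beta> i)) \<le> ln (2 * max 1 (norm (\<beta> i)))"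
      by (subst ln_le_cancel_iff) (auto simp: add_pos_nonneg)
    also have "\<dots> = ln 2 + ln (max 1 (norm (\<beta> i)))" by (simp add: ln_mult)
    finally show ?thesis .
  qed
  define g where "g n = e * (real m * ln (real (Suc n)) + real m * ln 2 + real m * real S * ln 2)" for n
  show ?thesis
  proof (intro exI[of _ g] conjI)
    have L1: "(\<lambda>n. ln (real (Suc n)) / real n) \<longlonglongrightarrow> 0" by real_asymp
    have L2: "(\<lambda>n. 1 / real n) \<longlonglongrightarrow> 0" by real_asymp
    have eq: "(\<lambda>n. g n / real n) = (\<lambda>n. (e * real m) * (ln (real (Suc n)) / real n) + (e * (real m * ln 2 + real m * real S * ln 2)) * (1 / real n))"
      by (rule ext) (simp add: g_def add_divide_distrib algebra_simps)
    show "(\<lambda>n. g n / real n) \<longlonglongrightarrow> 0"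
      unfolding eq using tendsto_add[OF tendsto_mult_right_zero[OF L1] tendsto_mult_right_zero[OF L2]] by simp
  next
    show "\<forall>\<^sub>F n in sequentially.
        ln (Max ((\<lambda>l. poly_norm_v K \<iota> (P_poly a b n l)) ` {0..m - 1}))
          \<le> real n * ((\<Sum>i<m. h_v K \<iota> (\<alpha> i)) + real m * ln (abs_v K \<iota> 4)) + g n"
    proof (rule always_eventually, rule allI)
      fix n
      have "ln (Max ((\<lambda>l. poly_norm_v K \<iota> (P_poly a b n l)) ` {0..m - 1})) \<le> e * ln (B n)"
        using lnMx[of n] unfolding Mx_def .
      also have "\<dots> \<le> e * (real m * ln (real (Suc n)) + real m * ln 2 + (\<Sum>i<m. real (n+S) * ln 2 + real n * (ln 2 + ln (max 1 (norm (\<beta> i))))))"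
        unfolding lnB using e0 lnb
        by (intro mult_left_mono add_left_mono sum_mono mult_left_mono) auto
      also have "\<dots> = real n * ((\<Sum>i<m. e * ln (max 1 (norm (\<beta> i)))) + real m * (e * (2 * ln 2))) + g n"
        by (simp add: g_def sum.distrib sum_distrib_left[symmetric] algebra_simps)
      also have "\<dots> = real n * ((\<Sum>i<m. h_v K \<iota> (\<alpha> i)) + real m * ln (abs_v K \<iota> 4)) + g n"
        by (simp add: hv l4)
      finally show "ln (Max ((\<lambda>l. poly_norm_v K \<iota> (P_poly a b n l)) ` {0..m - 1}))
          \<le> real n * ((\<Sum>i<m. h_v K \<iota> (\<alpha> i)) + real m * ln (abs_v K \<iota> 4)) + g n" .
    qed
  qed
qed

end
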